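(* Assume Hypotheses 1, 2 and 3 (see context). For any $x\in\Gamma$ and each $\mathbf{z}\in\mathbb{R}^m$, the set $T(x)\cap\mathcal{I}(\mathbf{z})$ contains exactly one point.
   Context: System $\dot x=F(x)$ with $F=(f,g)$, i.e. $\dot a=f(a,z)$, $\dot z=g(a,z)$, $(a,z)\in\mathbb{R}^n\times\mathbb{R}^m$, $X=\mathbb{R}^n\times\mathbb{R}^m$, flow $\Phi(t,x)$. Euclidean inner product, norm, operator norm. $\mathcal{L}(x_1,x_2)=\|a_2-a_1\|^2-\|z_2-z_1\|^2$, $\mathcal{C}(x)=\{x'\in X:\mathcal{L}(x',x)\ge0\}$, $\mathbf{0}$ the zero vector of $X$; $\Pi(a,z)=a$, $\Pi_\perp(a,z)=z$; $\mathbb{B}_d(x)=\{(a',z'):\|a'-a\|\le d,\|z'-z\|\le d\}$. $\Gamma\subseteq U$ positively invariant means $\Phi(t,x)$ is defined for all $t\ge0$ for $x\in\Gamma$ and $\Phi(t,\Gamma)\subseteq\Gamma$. Hypothesis 1: $U$ open and convex, and there is $d>0$ with $\mathcal{C}(x)\cap U\subset\mathbb{B}_d(x)$ for all $x\in U$. Hypothesis 2: $f,g$ are $C^1$ on $U$; there exist continuous $\alpha>0$, $\ell\ge0$ on $U$ and $c_1>0$ with, for all $x\in U$: $\langle a',D_af(x)a'\rangle\ge\alpha(x)\|a'\|^2$; $\langle z',D_zg(x)z'\rangle\le\ell(x)\|z'\|^2$; $\alpha(x)\ge\ell(x)+\|D_zf(x)\|+\|D_ag(x)\|+c_1$. Hypothesis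 3: $\Gamma\subset U$ is positively invariant and $\Pi_\perp(\Gamma)=\Pi_\perp(U)$. For $x\in\Gamma$, $Q(t,x)$ ($t\ge0$) denotes the fundamental matrix solution of the variational equation $\dot{\mathbf{x}}=DF(\Phi(t,x))\mathbf{x}$ with $Q(0,x)=I$. For $x\in\Gamma$, $T(x):=\{\mathbf{x}\in X: \mathcal{L}(Q(t,x)\mathbf{x},\mathbf{0})\le0\text{ for all }t\ge0\}$. For $\mathbf{z}\in\mathbb{R}^m$, $\mathcal{I}(\mathbf{z}):=\{(\mathbf{a},\mathbf{z}):\mathbf{a}\in\mathbb{R}^n\}$. *)

theory Defs
  imports "HOL-Analysis.Analysis"
begin

definition Lyap :: "((real^'n) \<times> (real^'m)) \<Rightarrow> ((real^'n) \<times> (real^'m)) \<Rightarrow> real" where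
  "Lyap x1 x2 = (norm (fst x2 - fst x1))\<^sup>2 - (norm (snd x2 - snd x1))\<^sup>2"

definition cone :: "((real^'n) \<times> (real^'m)) \<Rightarrow> ((real^'n) \<times> (real^'m)) set" where
  "cone x = {x'. Lyap x' x \<ge> 0}"

definition boxB :: "real \<Rightarrow> ((real^'n) \<times> (real^'m)) \<Rightarrow> ((real^'n) \<times> (real^'m)) set" where
  "boxB d x = {x'. norm (fst x' - fst x) \<le> d \<and> norm (snd x' - snd x) \<le> d}"

definition fiber :: "real^'m \<Rightarrow> ((real^'n) \<times> (real^'m)) set" where
  "fiber zz = {(aa, zz) | aa. True}"

text \<open>T(x) for a given fundamental matrix solution Q of the variational equation.\<close>
definition Tset ::
  "(real \<Rightarrow> ((real^'n) \<times> (real^'m)) \<Rightarrow> ((real^'n) \<times> (real^'m)) \<Rightarrow>\<^sub>L ((real^'n) \<times> (real^'m)))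
   \<Rightarrow> ((real^'n) \<times> (real^'m)) \<Rightarrow> ((real^'n) \<times> (real^'m)) set" where
  "Tset Q x = {v. \<forall>t\<ge>0. Lyap (blinfun_apply (Q t x) v) 0 \<le> 0}"

end

theory Submission
  imports Defs
begin

definition Lf :: "(real^'n) \<times> (real^'m) \<Rightarrow> real" where
  "Lf u = (norm (fst u))\<^sup>2 - (norm (snd u))\<^sup>2"

lemma key_ineq:
  fixes F :: "((real^'n) \<times> (real^'m)) \<Rightarrow>\<^sub>L (real^'n)"
    and G :: "((real^'n) \<times> (real^'m)) \<Rightarrow>\<^sub>L (real^'m)"
  assumes hA: "\<forall>a'. inner a' (F (a', 0)) \<ge> al * (norm a')\<^sup>2"
    and hZ: "\<forall>z'. inner z' (G (0, z')) \<le> el * (norm z')\<^sup>2"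
    and hD: "al \<ge> el + onorm (\<lambda>z'. F (0, z')) + onorm (\<lambda>a'. G (a', 0)) + c1"
    and c0: "0 \<le> c" and c2: "c \<le> 2 * c1"
  shows "2 * inner a (F (a, z)) - 2 * inner z (G (a, z)) - (al + el - c1 + c) * Lf (a, z) \<ge> 0"
proof -
  let ?B = "onorm (\<lambda>z'. F (0, z'))" and ?C = "onorm (\<lambda>a'. G (a', 0))"
  have blB: "bounded_linear (\<lambda>z'. F (0, z'))"
    by (intro bounded_linear_compose[OF blinfun.bounded_linear_right] bounded_linear_Pair bounded_linear_zero bounded_linear_ident)
  have blC: "bounded_linear (\<lambda>a'. G (a', 0))"
    by (intro bounded_linear_compose[OF blinfun.bounded_linear_right] bounded_linear_Pair bounded_linear_zero bounded_linear_ident)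
  have B0: "?B \<ge> 0" using onorm_pos_le[OF blB] .
  have C0: "?C \<ge> 0" using onorm_pos_le[OF blC] .
  have sF: "F (a, z) = F (a, 0) + F (0, z)"
    by (metis add.right_neutral add_Pair blinfun.add_right add.left_neutral)
  have sG: "G (a, z) = G (a, 0) + G (0, z)"
    by (metis add.right_neutral add_Pair blinfun.add_right add.left_neutral)
  have n1: "\<bar>inner a (F (0, z))\<bar> \<le> norm a * (?B * norm z)"
    by (rule order_trans[OF Cauchy_Schwarz_ineq2]) (simp add: mult_left_mono onorm[OF blB])
  have n2: "\<bar>inner z (G (a, 0))\<bar> \<le> norm z * (?C * norm a)"
    by (rule order_trans[OF Cauchy_Schwarz_ineq2]) (simp add: mult_left_mono onorm[OF blC])
  have i1: "inner a (F (a, 0)) \<ge> al * (norm a)\<^sup>2" using hA by blast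
  have i2: "inner z (G (0, z)) \<le> el * (norm z)\<^sup>2" using hZ by blast
  have amgm: "2 * (norm a * norm z) \<le> (norm a)\<^sup>2 + (norm z)\<^sup>2"
    using zero_le_power2[of "norm a - norm z"] unfolding power2_diff by linarith
  have lhs: "2 * inner a (F (a, z)) - 2 * inner z (G (a, z)) \<ge>
      2 * al * (norm a)\<^sup>2 - 2 * (?B + ?C) * (norm a * norm z) - 2 * el * (norm z)\<^sup>2"
  proof -
    have e1: "inner a (F (a, z)) = inner a (F (a, 0)) + inner a (F (0, z))" unfolding sF inner_add_right ..
    have e2: "inner z (G (a, z)) = inner z (G (a, 0)) + inner z (G (0, z))" unfolding sG inner_add_right ..
    have "- (norm a * (?B * norm z)) \<le> inner a (F (0, z))" using n1 by linarith
    moreover have "inner z (G (a, 0)) \<le> norm z * (?C * norm a)" using n2 by linarith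
    moreover have "norm a * (?B * norm z) + norm z * (?C * norm a) = (?B + ?C) * (norm a * norm z)"
      by (simp add: algebra_simps)
    ultimately show ?thesis using e1 e2 i1 i2 by linarith
  qed
  have "2 * (?B + ?C) * (norm a * norm z) \<le> (?B + ?C) * ((norm a)\<^sup>2 + (norm z)\<^sup>2)"
    using mult_left_mono[OF amgm, of "?B + ?C"] B0 C0 by (simp add: algebra_simps)
  moreover have "(al - ?B - ?C - el + c1 - c) * (norm a)\<^sup>2 \<ge> 0"
    using hD c2 by (intro mult_nonneg_nonneg) auto
  moreover have "(al - el - c1 + c - ?B - ?C) * (norm z)\<^sup>2 \<ge> 0"
    using hD c0 by (intro mult_nonneg_nonneg) auto
  ultimately show ?thesis using lhs unfolding Lf_def by (simp add: algebra_simps)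
qed

lemma mono_P:
  fixes y :: "real \<Rightarrow> (real^'n) \<times> (real^'m)" and p :: "real \<Rightarrow> (real^'n) \<times> (real^'m)"
    and Df :: "(real^'n) \<times> (real^'m) \<Rightarrow> ((real^'n) \<times> (real^'m)) \<Rightarrow>\<^sub>L (real^'n)"
    and Dg :: "(real^'n) \<times> (real^'m) \<Rightarrow> ((real^'n) \<times> (real^'m)) \<Rightarrow>\<^sub>L (real^'m)"
    and k :: "(real^'n) \<times> (real^'m) \<Rightarrow> real"
  assumes ycont: "continuous_on {0..} y" and yU: "\<And>t. 0 \<le> t \<Longrightarrow> y t \<in> U"
    and kc: "continuous_on U k"
    and pder: "\<And>t. 0 \<le> t \<Longrightarrow> (p has_vector_derivative (Df (y t) (p t), Dg (y t) (p t))) (at t within {0..})"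
    and key: "\<And>u a z. u \<in> U \<Longrightarrow> 2 * inner a (Df u (a, z)) - 2 * inner z (Dg u (a, z)) - (k u + e) * Lf (a, z) \<ge> 0"
    and st: "0 \<le> s" "s \<le> t"
  shows "exp (-(integral {0..s} (\<lambda>r. k (y r)) + e * s)) * Lf (p s)
       \<le> exp (-(integral {0..t} (\<lambda>r. k (y r)) + e * t)) * Lf (p t)"
proof -
  define B where "B = t + 1"
  define P where "P r = exp (-(integral {0..r} (\<lambda>r. k (y r)) + e * r)) * Lf (p r)" for r
  have kc': "continuous_on {0..B} (\<lambda>r. k (y r))"
    by (rule continuous_on_compose2[OF kc continuous_on_subset[OF ycont]]) (auto simp: yU)
  have dP: "(P has_real_derivative exp (-(integral {0..r} (\<lambda>r. k (y r)) + e * r)) *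
       (2 * inner (fst (p r)) (Df (y r) (p r)) - 2 * inner (snd (p r)) (Dg (y r) (p r)) - (k (y r) + e) * Lf (p r)))
       (at r within {0..B})" if r: "r \<in> {0..B}" for r
  proof -
    have dI: "((\<lambda>u. integral {0..u} (\<lambda>r. k (y r))) has_real_derivative k (y r)) (at r within {0..B})"
      using integral_has_vector_derivative[OF kc' r] by (simp add: has_real_derivative_iff_has_vector_derivative)
    have dp: "(p has_vector_derivative (Df (y r) (p r), Dg (y r) (p r))) (at r within {0..B})"
      by (rule has_vector_derivative_within_subset[OF pder]) (use r in auto)
    have dpa: "((\<lambda>r. fst (p r)) has_vector_derivative Df (y r) (p r)) (at r within {0..B})"
      using bounded_linear.has_vector_derivative[OF bounded_linear_fst dp] by simp
    have dpz: "((\<lambda>r. snd (p r)) has_vector_derivative Dg (y r) (p r)) (at r within {0..B})"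
      using bounded_linear.has_vector_derivative[OF bounded_linear_snd dp] by simp
    have da: "((\<lambda>r. inner (fst (p r)) (fst (p r))) has_vector_derivative
        (inner (fst (p r)) (Df (y r) (p r)) + inner (Df (y r) (p r)) (fst (p r)))) (at r within {0..B})"
      by (rule bounded_bilinear.has_vector_derivative[OF bounded_bilinear_inner dpa dpa])
    have dz: "((\<lambda>r. inner (snd (p r)) (snd (p r))) has_vector_derivative
        (inner (snd (p r)) (Dg (y r) (p r)) + inner (Dg (y r) (p r)) (snd (p r)))) (at r within {0..B})"
      by (rule bounded_bilinear.has_vector_derivative[OF bounded_bilinear_inner dpz dpz])
    have dL: "((\<lambda>r. Lf (p r)) has_real_derivative
        (2 * inner (fst (p r)) (Df (y r) (p r)) - 2 * inner (snd (p r)) (Dg (y r) (p r)))) (at r within {0..B})"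
    proof -
      have "((\<lambda>r. inner (fst (p r)) (fst (p r)) - inner (snd (p r)) (snd (p r))) has_vector_derivative
        ((inner (fst (p r)) (Df (y r) (p r)) + inner (Df (y r) (p r)) (fst (p r))) -
         (inner (snd (p r)) (Dg (y r) (p r)) + inner (Dg (y r) (p r)) (snd (p r))))) (at r within {0..B})"
        by (rule has_vector_derivative_diff[OF da dz])
      then show ?thesis unfolding Lf_def power2_norm_eq_inner
        by (simp add: has_real_derivative_iff_has_vector_derivative inner_commute)
    qed
    have dE: "((\<lambda>u. exp (-(integral {0..u} (\<lambda>r. k (y r)) + e * u))) has_real_derivative
        exp (-(integral {0..r} (\<lambda>r. k (y r)) + e * r)) * (-(k (y r) + e))) (at r within {0..B})"
      by (auto intro!: derivative_eq_intros dI)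
    show ?thesis unfolding P_def
      using DERIV_mult[OF dE dL] by (simp add: algebra_simps)
  qed
  have "P s \<le> P t"
  proof (rule DERIV_nonneg_imp_increasing_open[OF st(2)])
    fix x assume x: "s < x" "x < t"
    then have xi: "x \<in> interior {0..B}" using st by (auto simp: B_def)
    have "(P has_real_derivative exp (-(integral {0..x} (\<lambda>r. k (y r)) + e * x)) *
       (2 * inner (fst (p x)) (Df (y x) (p x)) - 2 * inner (snd (p x)) (Dg (y x) (p x)) - (k (y x) + e) * Lf (p x))) (at x)"
      using dP[of x] xi interior_subset at_within_interior[OF xi] by (metis subsetD)
    moreover have "0 \<le> exp (-(integral {0..x} (\<lambda>r. k (y r)) + e * x)) *
       (2 * inner (fst (p x)) (Df (y x) (p x)) - 2 * inner (snd (p x)) (Dg (y x) (p x)) - (k (y x) + e) * Lf (p x))"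
      using key[OF yU[of x], of "fst (p x)" "snd (p x)"] x st by simp
    ultimately show "\<exists>y. (P has_real_derivative y) (at x) \<and> 0 \<le> y" by blast
  next
    show "continuous_on {s..t} P"
      unfolding continuous_on_eq_continuous_within
    proof
      fix x assume "x \<in> {s..t}"
      then have "x \<in> {0..B}" using st by (auto simp: B_def)
      from DERIV_continuous[OF dP[OF this]] show "continuous (at x within {s..t}) P"
        by (rule continuous_within_subset) (use st in \<open>auto simp: B_def\<close>)
    qed
  qed
  then show ?thesis unfolding P_def .
qed

lemma Lf_quad:
  "Lf (u + s *\<^sub>R w) = Lf u + 2 * s * (inner (fst u) (fst w) - inner (snd u) (snd w)) + s\<^sup>2 * Lf w"
  unfolding Lf_def power2_norm_eq_inner
  by (simp add: inner_add_left inner_add_right inner_commute power2_eq_square algebra_simps)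

lemma Lyap_Lf: "Lyap u 0 = Lf u"
  unfolding Lyap_def Lf_def by simp

lemma arith_contra:
  fixes A Bc C K :: real
  assumes "C \<ge> 6 * K + 1" "K \<ge> 0" "A \<le> 0" "A \<ge> - K" "A + 2 * Bc + C \<le> 0" "Bc\<^sup>2 \<le> C * (A + K)"
  shows False
proof -
  have C0: "C > 0" using assms by linarith
  have h1: "C - K \<le> - 2 * Bc" using assms by linarith
  have h2: "0 \<le> C - K" using assms by linarith
  have "(C - K)\<^sup>2 \<le> (- 2 * Bc)\<^sup>2" using h1 h2 by (rule power_mono)
  also have "\<dots> = 4 * Bc\<^sup>2" by (simp add: power2_eq_square)
  also have "\<dots> \<le> 4 * (C * K)" using assms(6) assms(3) C0
    by (smt (verit) mult_left_mono)
  finally have "C * C - 6 * C * K + K * K \<le> 0" by (simp add: power2_eq_square algebra_simps)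
  moreover have "C * (C - 6 * K) \<ge> C * 1" using C0 assms(1) by (intro mult_left_mono) auto
  moreover have "K * K \<ge> 0" by simp
  ultimately show False using C0 by (simp add: algebra_simps)
qed

theorem lemma2p9:
  fixes f :: "(real^'n) \<times> (real^'m) \<Rightarrow> (real^'n)"
    and g :: "(real^'n) \<times> (real^'m) \<Rightarrow> (real^'m)"
    and Df :: "(real^'n) \<times> (real^'m) \<Rightarrow> ((real^'n) \<times> (real^'m)) \<Rightarrow>\<^sub>L (real^'n)"
    and Dg :: "(real^'n) \<times> (real^'m) \<Rightarrow> ((real^'n) \<times> (real^'m)) \<Rightarrow>\<^sub>L (real^'m)"
    and U \<Gamma> :: "((real^'n) \<times> (real^'m)) set"
    and \<alpha> ell :: "(real^'n) \<times> (real^'m) \<Rightarrow> real"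
    and c1 d :: real
    and \<Phi> :: "real \<Rightarrow> (real^'n) \<times> (real^'m) \<Rightarrow> (real^'n) \<times> (real^'m)"
    and Q :: "real \<Rightarrow> (real^'n) \<times> (real^'m) \<Rightarrow> ((real^'n) \<times> (real^'m)) \<Rightarrow>\<^sub>L ((real^'n) \<times> (real^'m))"
  assumes H1_open: "open U" and H1_convex: "convex U"
    and H1_d: "d > 0" and H1_cone: "\<forall>x\<in>U. cone x \<inter> U \<subseteq> boxB d x"
    and H2_f_deriv: "\<forall>x\<in>U. (f has_derivative blinfun_apply (Df x)) (at x)"
    and H2_g_deriv: "\<forall>x\<in>U. (g has_derivative blinfun_apply (Dg x)) (at x)"
    and H2_Df_cont: "continuous_on U Df" and H2_Dg_cont: "continuous_on U Dg"
    and H2_alpha_cont: "continuous_on U \<alpha>" and H2_ell_cont: "continuous_on U ell"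
    and H2_alpha_pos: "\<forall>x\<in>U. \<alpha> x > 0" and H2_ell_nonneg: "\<forall>x\<in>U. ell x \<ge> 0"
    and H2_c1: "c1 > 0"
    and H2_a: "\<forall>x\<in>U. \<forall>a'. inner a' (Df x (a', 0)) \<ge> \<alpha> x * (norm a')\<^sup>2"
    and H2_z: "\<forall>x\<in>U. \<forall>z'. inner z' (Dg x (0, z')) \<le> ell x * (norm z')\<^sup>2"
    and H2_dom: "\<forall>x\<in>U. \<alpha> x \<ge> ell x + onorm (\<lambda>z'. Df x (0, z')) + onorm (\<lambda>a'. Dg x (a', 0)) + c1"
    and H3_sub: "\<Gamma> \<subseteq> U"
    and H3_proj: "snd ` \<Gamma> = snd ` U"
    and flow: "\<forall>x\<in>\<Gamma>. \<Phi> 0 x = x \<and> (\<forall>t\<ge>0. \<Phi> t x \<in> \<Gamma> \<and>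
        ((\<lambda>s. \<Phi> s x) has_vector_derivative (f (\<Phi> t x), g (\<Phi> t x))) (at t within {0..}))"
    and fundamental: "\<forall>x\<in>\<Gamma>. Q 0 x = id_blinfun \<and> (\<forall>t\<ge>0.
        ((\<lambda>s. Q s x) has_vector_derivative
           (Blinfun (\<lambda>v. (Df (\<Phi> t x) v, Dg (\<Phi> t x) v)) o\<^sub>L Q t x)) (at t within {0..}))"
  shows "\<forall>x\<in>\<Gamma>. \<forall>zz::real^'m. \<exists>!v. v \<in> Tset Q x \<inter> fiber zz"
proof (intro ballI allI)
  fix x and zz :: "real^'m" assume xG: "x \<in> \<Gamma>"
  define y where "y t = \<Phi> t x" for t
  have yU: "\<And>t. 0 \<le> t \<Longrightarrow> y t \<in> U" using flow xG H3_sub unfolding y_def by blast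
  have ycont: "continuous_on {0..} y"
    unfolding continuous_on_eq_continuous_within
  proof
    fix t :: real assume "t \<in> {0..}"
    then have "((\<lambda>s. \<Phi> s x) has_vector_derivative (f (\<Phi> t x), g (\<Phi> t x))) (at t within {0..})"
      using flow xG by auto
    then show "continuous (at t within {0..}) y" unfolding y_def[abs_def]
      by (rule has_vector_derivative_continuous)
  qed
  define k where "k u = \<alpha> u + ell u" for u
  have kc: "continuous_on U k" unfolding k_def[abs_def]
    using H2_alpha_cont H2_ell_cont by (intro continuous_on_add)
  have Q0: "Q 0 x = id_blinfun" using fundamental xG by blast
  have pder: "((\<lambda>r. Q r x v) has_vector_derivative (Df (y t) (Q t x v), Dg (y t) (Q t x v))) (at t within {0..})"
    if t: "0 \<le> t" for v t
  proof -
    have bl: "bounded_linear (\<lambda>v. (Df (\<Phi> t x) v, Dg (\<Phi> t x) v))"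
      by (intro bounded_linear_Pair blinfun.bounded_linear_right)
    have "((\<lambda>s. Q s x) has_vector_derivative
           (Blinfun (\<lambda>v. (Df (\<Phi> t x) v, Dg (\<Phi> t x) v)) o\<^sub>L Q t x)) (at t within {0..})"
      using fundamental xG t by blast
    from bounded_linear.has_vector_derivative[OF blinfun.bounded_linear_left this, of v]
    show ?thesis by (simp add: bounded_linear_Blinfun_apply[OF bl] y_def)
  qed
  have keyc: "2 * inner a (Df u (a, z)) - 2 * inner z (Dg u (a, z)) - (k u + (c - c1)) * Lf (a, z) \<ge> 0"
    if "u \<in> U" "0 \<le> c" "c \<le> 2 * c1" for u a z c
  proof -
    have "2 * inner a (Df u (a, z)) - 2 * inner z (Dg u (a, z)) - (\<alpha> u + ell u - c1 + c) * Lf (a, z) \<ge> 0"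
      by (rule key_ineq) (use that H2_a H2_z H2_dom in auto)
    then show ?thesis by (simp add: k_def algebra_simps)
  qed
  define E where "E c t = exp (-(integral {0..t} (\<lambda>r. k (y r)) + (c - c1) * t))" for c t
  have mono: "E c s * Lf (Q s x v) \<le> E c t * Lf (Q t x v)"
    if "0 \<le> c" "c \<le> 2 * c1" "0 \<le> s" "s \<le> t" for c v s t
    unfolding E_def
    by (rule mono_P[OF ycont yU kc pder keyc]) (use that in auto)
  have Epos: "E c t > 0" for c t unfolding E_def by simp
  have E0: "E c 0 = 1" for c unfolding E_def by simp
  have base: "Lf v \<le> E c t * Lf (Q t x v)" if "0 \<le> c" "c \<le> 2 * c1" "0 \<le> t" for c v t
    using mono[OF that(1,2) order_refl that(3), of v] by (simp add: E0 Q0)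
  have TL: "v \<in> Tset Q x \<longleftrightarrow> (\<forall>t\<ge>0. Lf (Q t x v) \<le> 0)" for v
    unfolding Tset_def by (simp add: Lyap_Lf)
  have fibL: "v \<in> fiber zz \<longleftrightarrow> snd v = zz" for v
    unfolding fiber_def by (cases v) auto
  have c10: "0 \<le> (0::real)" "(0::real) \<le> 2 * c1" using H2_c1 by auto
  have ex_t: "\<exists>a. fst (Q t x (a, zz)) = 0" if t: "0 \<le> t" for t
  proof -
    define h where "h a = fst (Q t x (a, 0))" for a
    have blh: "bounded_linear h" unfolding h_def[abs_def]
      by (intro bounded_linear_compose[OF bounded_linear_fst] bounded_linear_compose[OF blinfun.bounded_linear_right]
          bounded_linear_Pair bounded_linear_zero bounded_linear_ident)
    then have lh: "linear h" by (rule bounded_linear.linear)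
    have "inj h"
      unfolding linear_inj_iff_eq_0[OF lh]
    proof (intro allI impI)
      fix a assume ha: "h a = 0"
      have "Lf (Q t x (a, 0)) \<le> 0" using ha unfolding Lf_def h_def by simp
      then have "E 0 t * Lf (Q t x (a, 0)) \<le> 0" using Epos[of 0 t] by (simp add: mult_nonneg_nonpos)
      then have "Lf (a, 0::real^'m) \<le> 0" using base[OF c10 t, of "(a, 0)"] by linarith
      then show "a = 0" unfolding Lf_def by simp
    qed
    then have "surj h" by (rule linear_inj_imp_surj[OF lh])
    then obtain a where ha: "h a = - fst (Q t x (0, zz))" by (metis surjD)
    have "Q t x (a, zz) = Q t x (a, 0) + Q t x (0, zz)"
      by (metis add.right_neutral add_Pair blinfun.add_right add.left_neutral)
    then have "fst (Q t x (a, zz)) = 0" using ha unfolding h_def by simp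
    then show ?thesis ..
  qed
  have goodpt: "Lf (Q s x (a, zz)) \<le> 0"
    if "0 \<le> s" "s \<le> t" "fst (Q t x (a, zz)) = 0" for s t a
  proof -
    have "Lf (Q t x (a, zz)) \<le> 0" using that(3) unfolding Lf_def by simp
    then have "E 0 t * Lf (Q t x (a, zz)) \<le> 0" using Epos[of 0 t] by (simp add: mult_nonneg_nonpos)
    then have "E 0 s * Lf (Q s x (a, zz)) \<le> 0" using mono[OF c10 that(1,2), of "(a, zz)"] by linarith
    then show ?thesis using Epos[of 0 s] by (simp add: mult_le_0_iff)
  qed
  obtain A where A: "\<And>n. fst (Q (real n) x (A n, zz)) = 0"
  proof -
    have "\<forall>n. \<exists>a. fst (Q (real n) x (a, zz)) = 0" using ex_t by simp
    then show ?thesis using that by metis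
  qed
  have Ab: "A n \<in> cball 0 (norm zz)" for n
  proof -
    have "Lf (Q 0 x (A n, zz)) \<le> 0" by (rule goodpt[OF order_refl _ A]) simp
    then have "(norm (A n))\<^sup>2 \<le> (norm zz)\<^sup>2" unfolding Lf_def Q0 by simp
    then show ?thesis by (simp add: power2_le_iff_abs_le)
  qed
  obtain l r where lr: "strict_mono (r :: nat \<Rightarrow> nat)" "(A \<circ> r) \<longlonglongrightarrow> l"
    using seq_compactE[OF compact_imp_seq_compact[OF compact_cball], of A] Ab by metis
  have exist: "(l, zz) \<in> Tset Q x"
    unfolding TL
  proof (intro allI impI)
    fix s :: real assume s: "0 \<le> s"
    have ic: "isCont (\<lambda>a. Lf (Q s x (a, zz))) l"
      unfolding Lf_def by (intro continuous_intros)
    have lim: "(\<lambda>n. Lf (Q s x ((A \<circ> r) n, zz))) \<longlonglongrightarrow> Lf (Q s x (l, zz))"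
      by (rule isCont_tendsto_compose[OF ic lr(2)])
    show "Lf (Q s x (l, zz)) \<le> 0"
    proof (rule LIMSEQ_le_const2[OF lim])
      show "\<exists>N. \<forall>n\<ge>N. Lf (Q s x ((A \<circ> r) n, zz)) \<le> 0"
      proof (intro exI allI impI)
        fix n assume n: "nat \<lceil>s\<rceil> \<le> n"
        have "s \<le> real (r n)" using n seq_suble[OF lr(1), of n]
          by (smt (verit, best) of_nat_ceiling of_nat_mono)
        then show "Lf (Q s x ((A \<circ> r) n, zz)) \<le> 0"
          using goodpt[OF s _ A] by simp
      qed
    qed
  qed
  have uniq: "a1 = a2" if v1: "(a1, zz) \<in> Tset Q x" and v2: "(a2, zz) \<in> Tset Q x" for a1 a2
  proof (rule ccontr)
    assume ne: "a1 \<noteq> a2"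
    define w where "w = (a2 - a1, 0::real^'m)"
    define \<delta> where "\<delta> = (norm (a2 - a1))\<^sup>2"
    define K where "K = (norm zz)\<^sup>2"
    have d0: "\<delta> > 0" using ne unfolding \<delta>_def by simp
    have K0: "K \<ge> 0" unfolding K_def by simp
    define t where "t = (6 * K + 1) / (2 * c1 * \<delta>)"
    have t0: "0 \<le> t" unfolding t_def using K0 d0 H2_c1 by simp
    have Lw: "Lf w = \<delta>" unfolding Lf_def w_def \<delta>_def by simp
    have grow2: "\<delta> \<le> E (2 * c1) t * Lf (Q t x w)"
      using base[of "2 * c1" t w] H2_c1 t0 Lw by simp
    have Erel: "E 0 t = exp (2 * c1 * t) * E (2 * c1) t"
      unfolding E_def by (simp add: exp_add[symmetric] algebra_simps)
    define C where "C = E 0 t * Lf (Q t x w)"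
    define Av where "Av = E 0 t * Lf (Q t x (a1, zz))"
    define Bc where "Bc = E 0 t * (inner (fst (Q t x (a1, zz))) (fst (Q t x w)) - inner (snd (Q t x (a1, zz))) (snd (Q t x w)))"
    have quad: "E 0 t * Lf (Q t x ((a1, zz) + s *\<^sub>R w)) = Av + 2 * s * Bc + s\<^sup>2 * C" for s
      unfolding C_def Av_def Bc_def blinfun.add_right blinfun.scaleR_right Lf_quad
      by (simp add: algebra_simps)
    have lowq: "Av + 2 * s * Bc + s\<^sup>2 * C \<ge> - K" for s
    proof -
      have "Lf ((a1, zz) + s *\<^sub>R w) \<ge> - K" unfolding Lf_def K_def w_def by simp
      then show ?thesis using base[OF c10 t0, of "(a1, zz) + s *\<^sub>R w"] quad[of s] by linarith
    qed
    have "exp (2 * c1 * t) \<ge> 1 + 2 * c1 * t" by (rule exp_ge_add_one_self)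
    then have "exp (2 * c1 * t) \<ge> 2 * c1 * t" by linarith
    then have "exp (2 * c1 * t) * \<delta> \<ge> (2 * c1 * t) * \<delta>" using d0 by (intro mult_right_mono) auto
    moreover have "(2 * c1 * t) * \<delta> = 6 * K + 1" unfolding t_def using H2_c1 d0 by simp
    moreover have "exp (2 * c1 * t) * \<delta> \<le> C"
      unfolding C_def Erel using grow2 by (simp add: mult.assoc mult_left_mono)
    ultimately have C6: "C \<ge> 6 * K + 1" by linarith
    have Av0: "Av \<le> 0" using v1 t0 Epos[of 0 t] unfolding TL Av_def by (simp add: mult_nonneg_nonpos)
    have AvK: "Av \<ge> - K" using lowq[of 0] by simp
    have "(a1, zz) + 1 *\<^sub>R w = (a2, zz)" unfolding w_def by simp
    then have "Av + 2 * Bc + C \<le> 0" using quad[of 1] v2 t0 Epos[of 0 t] unfolding TL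
      by (metis mult_nonneg_nonpos less_imp_le scaleR_one power_one mult_1 mult.right_neutral)
    moreover have "Bc\<^sup>2 \<le> C * (Av + K)"
    proof -
      have Cp: "C > 0" using C6 K0 by linarith
      have "Av + 2 * (- Bc / C) * Bc + (- Bc / C)\<^sup>2 * C \<ge> - K" by (rule lowq)
      then have "Av - Bc\<^sup>2 / C \<ge> - K" using Cp by (simp add: power2_eq_square field_simps)
      then show ?thesis using Cp by (simp add: field_simps)
    qed
    ultimately show False using arith_contra[OF C6 K0 Av0 AvK] by blast
  qed
  show "\<exists>!v. v \<in> Tset Q x \<inter> fiber zz"
  proof (rule ex1I[of _ "(l, zz)"])
    show "(l, zz) \<in> Tset Q x \<inter> fiber zz" using exist by (simp add: fibL)
  next
    fix v assume v: "v \<in> Tset Q x \<inter> fiber zz"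
    have va: "v = (fst v, zz)" using v fibL by (metis IntD2 prod.collapse)
    show "v = (l, zz)" using uniq[of "fst v" l] v exist va by auto
  qed
qed

end
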